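(* There exist universal constants $c,C>0$ such that for all $x,y\ge1$, \[ c\,\frac{x}{x+y}\le(xB(x,y))^{1/x}\le C\,\frac{x}{x+y}. \] Moreover, for all $k,r>1$ and all $p$ with $|p|\le(\min(r,k)-1)/2$, \[ 0\le\frac{d}{dp}\left(\frac1p\log\frac{B(k+p,r-p)}{B(k,r)}\right)\le\frac{1}{r-1}+\frac{1}{k-1}. \]
   Context: $B(x,y)=\int_0^1u^{x-1}(1-u)^{y-1}du=\Gamma(x)\Gamma(y)/\Gamma(x+y)$ is the Beta function; the function $p\mapsto\frac1p\log\frac{B(k+p,r-p)}{B(k,r)}$ is extended continuously at $p=0$. *)

theory Defs
  imports "HOL-Analysis.Analysis"
begin

definition beta_ratio_fun :: "real \<Rightarrow> real \<Rightarrow> real \<Rightarrow> real" where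
  "beta_ratio_fun k r p =
     (if p = 0 then Lim (at 0) (\<lambda>q. (1 / q) * ln (Beta (k + q) (r - q) / Beta k r))
      else (1 / p) * ln (Beta (k + p) (r - p) / Beta k r))"

end

theory Submission imports Defs begin

lemma lnG_succ: "t > 0 \<Longrightarrow> ln_Gamma (t + 1) - ln_Gamma t = ln (t::real)"
proof -
  assume t: "t > 0"
  have "Gamma (t+1) = t * Gamma t" using t by (intro Gamma_plus1) (auto elim!: nonpos_Ints_cases)
  moreover have "ln (t * Gamma t) = ln t + ln (Gamma t)" by (rule ln_mult_pos) (use t in auto)
  ultimately have "ln (Gamma (t+1)) = ln t + ln (Gamma t)" by simp
  thus ?thesis using t by (simp add: ln_Gamma_real_pos)
qed

lemma lnG_mvt: assumes t: "(t::real) > 0"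
  shows "\<exists>z. t < z \<and> z < t + 1 \<and> ln t = Digamma z"
proof -
  have "\<exists>z. t < z \<and> z < t + 1 \<and> ln_Gamma (t+1) - ln_Gamma t = (t + 1 - t) * Digamma z"
    by (rule MVT2) (use t in \<open>auto intro!: has_field_derivative_ln_Gamma_real\<close>)
  thus ?thesis using lnG_succ[OF t] by simp
qed

lemma dig_le: assumes t: "(t::real) > 0" shows "Digamma t \<le> ln t"
proof -
  obtain z where z: "t < z" "z < t + 1" "ln t = Digamma z" using lnG_mvt[OF t] by blast
  have "Digamma t \<le> Digamma z" using t z by (intro Digamma_real_mono) auto
  thus ?thesis using z by simp
qed

lemma dig_ge: assumes t: "(t::real) > 0" shows "Digamma t \<ge> ln t - 1 / t"
proof -
  obtain z where z: "t < z" "z < t + 1" "ln t = Digamma z" using lnG_mvt[OF t] by blast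
  have "Digamma z \<le> Digamma (t+1)" using t z by (intro Digamma_real_mono) auto
  moreover have "Digamma (t+1) = Digamma t + 1 / t" using Polygamma_plus1[of t 0] t by simp
  ultimately show ?thesis using z by simp
qed

lemma u_dec: assumes "0 < a" "a \<le> b"
  shows "ln_Gamma b - (b * ln b - b) \<le> ln_Gamma a - (a * ln a - (a::real))"
proof -
  have "(\<lambda>t. -(ln_Gamma t - (t * ln t - t))) a \<le> (\<lambda>t. -(ln_Gamma t - (t * ln t - t))) b"
  proof (rule deriv_nonneg_imp_mono[where g = "\<lambda>t. -(ln_Gamma t - (t * ln t - t))" and g' = "\<lambda>x. -(Digamma x - (1 * ln x + x * (1/x) - 1))"])
    fix x assume x: "x \<in> {a..b}"
    hence xp: "x > 0" using assms by auto
    show "((\<lambda>t. -(ln_Gamma t - (t * ln t - t))) has_real_derivative -(Digamma x - (1 * ln x + x * (1/x) - 1))) (at x)"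
      using xp by (auto intro!: derivative_eq_intros has_field_derivative_ln_Gamma_real)
    show "-(Digamma x - (1 * ln x + x * (1/x) - 1)) \<ge> 0" using dig_le[OF xp] xp by simp
  qed (use assms in auto)
  thus ?thesis by simp
qed

lemma v_inc: assumes "0 < a" "a \<le> b"
  shows "ln_Gamma a - (a * ln a - a) + ln a \<le> ln_Gamma b - (b * ln b - (b::real)) + ln b"
proof -
  show ?thesis
  proof (rule deriv_nonneg_imp_mono[where g = "\<lambda>t. ln_Gamma t - (t * ln t - t) + ln t" and g' = "\<lambda>x. Digamma x - (1 * ln x + x * (1/x) - 1) + 1/x"
])
    fix x assume x: "x \<in> {a..b}"
    hence xp: "x > 0" using assms by auto
    show "((\<lambda>t. ln_Gamma t - (t * ln t - t) + ln t) has_real_derivative Digamma x - (1 * ln x + x * (1/x) - 1) + 1/x) (at x)"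
      using xp by (auto intro!: derivative_eq_intros has_field_derivative_ln_Gamma_real)
    show "Digamma x - (1 * ln x + x * (1/x) - 1) + 1/x \<ge> 0" using dig_ge[OF xp] xp by simp
  qed (use assms in auto)
qed


lemma lnG1: "ln_Gamma (1::real) = 0" by (simp add: ln_Gamma_real_pos)

lemma part1_h:
  fixes x y :: real assumes x: "x \<ge> 1" and y: "y \<ge> 1"
  shows "- x \<le> ln_Gamma (x+1) + ln_Gamma y - ln_Gamma (x+y) - x * (ln x - ln (x+y))"
    and "ln_Gamma (x+1) + ln_Gamma y - ln_Gamma (x+y) - x * (ln x - ln (x+y)) \<le> 3 * x"
proof -
  have U1: "ln_Gamma (x+1) - ((x+1) * ln (x+1) - (x+1)) \<le> 1"
    using u_dec[of 1 "x+1"] x by (simp add: lnG1)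
  have V1: "1 \<le> ln_Gamma (x+1) - ((x+1) * ln (x+1) - (x+1)) + ln (x+1)"
    using v_inc[of 1 "x+1"] x by (simp add: lnG1)
  have U2: "ln_Gamma (x+y) - ((x+y) * ln (x+y) - (x+y)) \<le> ln_Gamma y - (y * ln y - y)"
    using u_dec[of y "x+y"] x y by simp
  have V2: "ln_Gamma y - (y * ln y - y) + ln y \<le> ln_Gamma (x+y) - ((x+y) * ln (x+y) - (x+y)) + ln (x+y)"
    using v_inc[of y "x+y"] x y by simp
  have l1: "ln (x+1) - ln x \<le> 1 / x"
    using ln_le_minus_one[of "(x+1)/x"] x by (simp add: ln_divide_pos field_simps)
  hence l1': "x * (ln (x+1) - ln x) \<le> 1" using x by (simp add: field_simps)
  have l1p: "ln (x+1) - ln x \<ge> 0" using x by simp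
  hence l1p': "x * (ln (x+1) - ln x) \<ge> 0" using x by simp
  have l2: "ln (x+1) \<le> x" using ln_le_minus_one[of "x+1"] x by simp
  have xy: "x + y > 0" using x y by simp
  have l3: "ln (x+y) - ln y \<le> x / y"
    using ln_le_minus_one[of "(x+y)/y"] y xy by (simp add: ln_divide_pos field_simps)
  hence l3': "y * (ln (x+y) - ln y) \<le> x" using xy y by (simp add: field_simps)
  have l3b: "x / y \<le> x" using x y by (simp add: field_simps)
  have l3p: "ln (x+y) - ln y \<ge> 0" using x y by simp
  hence l3p': "y * (ln (x+y) - ln y) \<ge> 0" using y by simp
  have V1': "1 \<le> ln_Gamma (x+1) - x * ln (x+1) + x + 1" using V1 by (simp add: algebra_simps)
  have U1': "ln_Gamma (x+1) - x * ln (x+1) - ln (x+1) + x + 1 \<le> 1" using U1 by (simp add: algebra_simps)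
  have U2': "ln_Gamma (x+y) - x * ln (x+y) - y * ln (x+y) + x + y \<le> ln_Gamma y - y * ln y + y"
    using U2 by (simp add: algebra_simps)
  have V2': "ln_Gamma y - y * ln y + y + ln y \<le> ln_Gamma (x+y) - x * ln (x+y) - y * ln (x+y) + x + y + ln (x+y)"
    using V2 by (simp add: algebra_simps)
  have a1: "x * ln (x+1) - x * ln x \<ge> 0" using l1p' by (simp add: algebra_simps)
  have a2: "y * ln (x+y) - y * ln y \<le> x" using l3' by (simp add: algebra_simps)
  have a3: "x * ln (x+1) - x * ln x \<le> 1" using l1' by (simp add: algebra_simps)
  have a4: "y * ln (x+y) - y * ln y \<ge> 0" using l3p' by (simp add: algebra_simps)
  have e: "x * (ln x - ln (x+y)) = x * ln x - x * ln (x+y)" by (simp add: algebra_simps)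
  show "- x \<le> ln_Gamma (x+1) + ln_Gamma y - ln_Gamma (x+y) - x * (ln x - ln (x+y))"
    unfolding e using V1' U2' a1 a2 by linarith
  show "ln_Gamma (x+1) + ln_Gamma y - ln_Gamma (x+y) - x * (ln x - ln (x+y)) \<le> 3 * x"
    unfolding e using U1' V2' a3 a4 l2 l3 l3b x by linarith
qed

lemma part1_xy:
  fixes x y :: real assumes x: "x \<ge> 1" and y: "y \<ge> 1"
  shows "exp (-1) * (x / (x + y)) \<le> (x * Beta x y) powr (1 / x) \<and>
              (x * Beta x y) powr (1 / x) \<le> exp 3 * (x / (x + y))"
proof -
  define h where "h = ln_Gamma (x+1) + ln_Gamma y - ln_Gamma (x+y)"
  have G: "Gamma (x+1) = x * Gamma x" using x by (intro Gamma_plus1) (auto elim!: nonpos_Ints_cases)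
  have xB: "x * Beta x y = Gamma (x+1) * Gamma y / Gamma (x+y)"
    unfolding Beta_def G by simp
  have pos: "x * Beta x y > 0" unfolding xB using x y by simp
  have lnxB: "ln (x * Beta x y) = h"
    unfolding xB h_def using x y
    by (simp add: ln_divide_pos ln_mult_pos ln_Gamma_real_pos)
  have E: "(x * Beta x y) powr (1 / x) = exp (h / x)"
  proof -
    have "x * Beta x y \<noteq> 0" using pos by linarith
    thus ?thesis unfolding powr_def lnxB by simp
  qed
  have R: "x / (x + y) = exp (ln x - ln (x+y))" using x y by (simp add: ln_divide_pos[symmetric])
  have b1: "- x \<le> h - x * (ln x - ln (x+y))" and b2: "h - x * (ln x - ln (x+y)) \<le> 3 * x"
    using part1_h[OF x y] unfolding h_def by auto
  have "-1 + (ln x - ln (x+y)) \<le> h / x" using b1 x by (simp add: field_simps)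
  hence 1: "exp (-1) * (x / (x + y)) \<le> (x * Beta x y) powr (1 / x)"
    unfolding E R by (simp add: exp_add[symmetric])
  have "h / x \<le> 3 + (ln x - ln (x+y))" using b2 x by (simp add: field_simps)
  hence 2: "(x * Beta x y) powr (1 / x) \<le> exp 3 * (x / (x + y))"
    unfolding E R by (simp add: exp_add[symmetric])
  show ?thesis using 1 2 by blast
qed

lemma part1:
  "\<exists>c C :: real. c > 0 \<and> C > 0 \<and>
           (\<forall>x y :: real. x \<ge> 1 \<longrightarrow> y \<ge> 1 \<longrightarrow>
              c * (x / (x + y)) \<le> (x * Beta x y) powr (1 / x) \<and>
              (x * Beta x y) powr (1 / x) \<le> C * (x / (x + y)))"
  apply (rule exI[of _ "exp (-1)"], rule exI[of _ "exp 3"])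
  apply (intro conjI exp_gt_zero allI impI)
   apply (erule (1) part1_xy[THEN conjunct1])
  apply (erule (1) part1_xy[THEN conjunct2])
  done


definition GG :: "real \<Rightarrow> real \<Rightarrow> real \<Rightarrow> real" where
  "GG k r y = ln_Gamma (k+y) + ln_Gamma (r-y) - ln_Gamma k - ln_Gamma r"
definition G1 :: "real \<Rightarrow> real \<Rightarrow> real \<Rightarrow> real" where
  "G1 k r y = Digamma (k+y) - Digamma (r-y)"
definition G2 :: "real \<Rightarrow> real \<Rightarrow> real \<Rightarrow> real" where
  "G2 k r y = Polygamma 1 (k+y) + Polygamma 1 (r-y)"

lemma pos_notin: "(z::real) > 0 \<Longrightarrow> z \<notin> \<int>\<^sub>\<le>\<^sub>0"
  by (auto elim!: nonpos_Ints_cases)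

lemma GG_deriv: assumes "k + y > 0" "r - y > 0"
  shows "(GG k r has_real_derivative G1 k r y) (at y)"
proof -
  have "((\<lambda>y. ln_Gamma (k+y) + ln_Gamma (r-y) - ln_Gamma k - ln_Gamma r) has_real_derivative
        Digamma (k+y) * (0 + 1) + Digamma (r-y) * (0 - 1) - 0 - 0) (at y)"
    using assms by (intro derivative_intros DERIV_chain2[OF has_field_derivative_ln_Gamma_real]) auto
  thus ?thesis unfolding GG_def[abs_def] G1_def by simp
qed

lemma G1_deriv: assumes "k + y > 0" "r - y > 0"
  shows "(G1 k r has_real_derivative G2 k r y) (at y)"
proof -
  have "((\<lambda>y. Digamma (k+y) - Digamma (r-y)) has_real_derivative
        Polygamma 1 (k+y) * (0 + 1) - Polygamma 1 (r-y) * (0 - 1)) (at y)"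
  proof -
    have d1: "(Digamma has_real_derivative Polygamma 1 (k+y)) (at (k+y))"
      using has_field_derivative_Polygamma[of "k+y" 0 UNIV] pos_notin assms by simp
    have d2: "(Digamma has_real_derivative Polygamma 1 (r-y)) (at (r-y))"
      using has_field_derivative_Polygamma[of "r-y" 0 UNIV] pos_notin assms by simp
    have e1: "((\<lambda>z. Digamma (k+z)) has_real_derivative Polygamma 1 (k+y) * (0+1)) (at y)"
      by (rule DERIV_chain2[where g="\<lambda>z. k+z", OF d1]) (intro derivative_intros)
    have e2: "((\<lambda>z. Digamma (r-z)) has_real_derivative Polygamma 1 (r-y) * (0-1)) (at y)"
      by (rule DERIV_chain2[where g="\<lambda>z. r-z", OF d2]) (intro derivative_intros)
    show ?thesis by (intro derivative_intros e1 e2)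
  qed
  thus ?thesis unfolding G1_def[abs_def] G2_def by simp
qed

lemma G2_cont: assumes "k > 0" "r > 0" shows "isCont (G2 k r) 0"
  unfolding G2_def[abs_def] using assms by (intro continuous_intros pos_notin) auto

lemma pg1_bound: assumes z: "(z::real) > 1" shows "Polygamma 1 z \<le> 1 / (z - 1)"
proof -
  have "\<exists>e. z - 1 < e \<and> e < z \<and> Digamma z - Digamma (z-1) = (z - (z - 1)) * Polygamma 1 e"
    by (rule MVT2) (use z in \<open>auto intro!: has_field_derivative_Polygamma pos_notin\<close>)
  then obtain e where e: "z - 1 < e" "e < z" "Digamma z - Digamma (z-1) = Polygamma 1 e" by auto
  have "Digamma ((z-1) + 1) = Digamma (z-1) + 1 / (z-1)" using Polygamma_plus1[of "z-1" 0] z by simp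
  hence "Polygamma 1 e = 1 / (z-1)" using e by simp
  moreover have "Polygamma 1 z < Polygamma 1 e" using e z by (intro Polygamma_real_strict_antimono) auto
  ultimately show ?thesis by simp
qed

lemma pg1_bound2: fixes k t :: real assumes k: "k > 1" and t: "\<bar>t\<bar> \<le> (k - 1) / 2"
  shows "0 \<le> Polygamma 1 (k + t)" "Polygamma 1 (k + t) \<le> 2 / (k - 1)"
proof -
  have z: "k + t > 1" using k t by auto
  show "0 \<le> Polygamma 1 (k + t)" using z by (intro less_imp_le Polygamma_real_odd_pos pos_notin) auto
  have "Polygamma 1 (k+t) \<le> 1 / (k + t - 1)" using pg1_bound[OF z] by simp
  also have "\<dots> \<le> 1 / ((k - 1) / 2)" using z k t by (intro divide_left_mono) auto
  finally show "Polygamma 1 (k + t) \<le> 2 / (k - 1)" by simp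
qed

lemma G2_bound: assumes k: "k > 1" and r: "r > 1" and t: "\<bar>t\<bar> \<le> (min r k - 1) / 2"
  shows "0 \<le> G2 k r t" "G2 k r t \<le> 2 / (k - 1) + 2 / (r - 1)"
proof -
  have t1: "\<bar>t\<bar> \<le> (k - 1) / 2" and t2: "\<bar>-t\<bar> \<le> (r - 1) / 2" using t by auto
  note a = pg1_bound2[OF k t1] and b = pg1_bound2[OF r t2]
  show "0 \<le> G2 k r t" "G2 k r t \<le> 2 / (k - 1) + 2 / (r - 1)"
    unfolding G2_def using a b by auto
qed

lemma taylorG:
  assumes k: "k > 0" and r: "r > 0" and c: "\<bar>c\<bar> < min k r" and x: "\<bar>x\<bar> < min k r" and xc: "x \<noteq> c"
  shows "\<exists>t. (if x < c then x < t \<and> t < c else c < t \<and> t < x) \<and>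
     GG k r x = GG k r c + G1 k r c * (x - c) + G2 k r t / 2 * (x - c)^2"
proof -
  define diff where "diff = (\<lambda>n::nat. if n = 0 then GG k r else if n = 1 then G1 k r else G2 k r)"
  have "\<exists>t. (if x < c then x < t \<and> t < c else c < t \<and> t < x) \<and>
    GG k r x = (\<Sum>m<2. (diff m c / fact m) * (x - c)^m) + (diff 2 t / fact 2) * (x - c)^2"
  proof (rule Taylor[where a = "min x c" and b = "max x c"])
    show "\<forall>m t. m < 2 \<and> min x c \<le> t \<and> t \<le> max x c \<longrightarrow> DERIV (diff m) t :> diff (Suc m) t"
    proof (intro allI impI)
      fix m :: nat and t :: real assume mt: "m < 2 \<and> min x c \<le> t \<and> t \<le> max x c"
      hence "k + t > 0" "r - t > 0" using c x by auto
      thus "DERIV (diff m) t :> diff (Suc m) t"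
        using mt GG_deriv G1_deriv unfolding diff_def by (cases m) auto
    qed
  qed (use xc in \<open>auto simp: diff_def\<close>)
  thus ?thesis by (simp add: diff_def numeral_2_eq_2 eval_nat_numeral)
qed


lemma beta_eq: assumes k: "k > 0" and r: "r > 0" and y: "\<bar>y\<bar> < min k r"
  shows "ln (Beta (k+y) (r-y) / Beta k r) = GG k r y"
proof -
  have p: "Gamma (k+y) > 0" "Gamma (r-y) > 0" "Gamma k > 0" "Gamma r > 0" "Gamma (k+r) > 0"
    using k r y by auto
  have kr: "k + y + (r - y) = k + r" by simp
  have "Beta (k+y) (r-y) / Beta k r = (Gamma (k+y) * Gamma (r-y) / Gamma (k+r)) / (Gamma k * Gamma r / Gamma (k+r))"
    unfolding Beta_def kr ..
  also have "\<dots> = (Gamma (k+y) * Gamma (r-y)) / (Gamma k * Gamma r)"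
    using p(5) by (simp add: divide_simps)
  also have "ln \<dots> = ln (Gamma (k+y)) + ln (Gamma (r-y)) - (ln (Gamma k) + ln (Gamma r))"
    using p by (simp add: ln_divide_pos ln_mult_pos)
  moreover have "ln_Gamma (k+y) = ln (Gamma (k+y))" "ln_Gamma (r-y) = ln (Gamma (r-y))"
    "ln_Gamma k = ln (Gamma k)" "ln_Gamma r = ln (Gamma r)"
    using k r y by (auto intro!: ln_Gamma_real_pos)
  ultimately show ?thesis unfolding GG_def by simp
qed

lemma GG0: "GG k r 0 = 0" by (simp add: GG_def)

lemma F_eq: assumes k: "k > 0" and r: "r > 0" and y: "\<bar>y\<bar> < min k r"
  shows "beta_ratio_fun k r y = (if y = 0 then G1 k r 0 else GG k r y / y)"
proof (cases "y = 0")
  case False thus ?thesis unfolding beta_ratio_fun_def using beta_eq[OF k r y] by simp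
next
  case True
  have "(GG k r has_real_derivative G1 k r 0) (at 0)" using k r by (intro GG_deriv) auto
  hence "((\<lambda>q. (GG k r q - GG k r 0) / (q - 0)) \<longlongrightarrow> G1 k r 0) (at 0)"
    by (simp add: has_field_derivative_iff)
  moreover have "eventually (\<lambda>q. (GG k r q - GG k r 0) / (q - 0) = (1 / q) * ln (Beta (k + q) (r - q) / Beta k r)) (at 0)"
    unfolding eventually_at
  proof (intro exI[of _ "min k r"] conjI ballI impI)
    show "min k r > 0" using k r by simp
    fix q :: real assume q: "q \<noteq> 0 \<and> dist q 0 < min k r"
    hence "\<bar>q\<bar> < min k r" by simp
    from beta_eq[OF k r this] q
    show "(GG k r q - GG k r 0) / (q - 0) = (1 / q) * ln (Beta (k + q) (r - q) / Beta k r)"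
      by (simp add: GG0)
  qed
  ultimately have "((\<lambda>q. (1 / q) * ln (Beta (k + q) (r - q) / Beta k r)) \<longlongrightarrow> G1 k r 0) (at 0)"
    by (rule tendsto_cong[THEN iffD1, rotated])
  hence "Lim (at 0) (\<lambda>q. (1 / q) * ln (Beta (k + q) (r - q) / Beta k r)) = G1 k r 0"
    by (intro tendsto_Lim trivial_limit_at)
  thus ?thesis using True unfolding beta_ratio_fun_def by simp
qed


lemma part2_H:
  assumes k: "k > 1" and r: "r > 1" and p: "\<bar>p\<bar> \<le> (min r k - 1) / 2"
  shows "\<exists>D. ((\<lambda>y. if y = 0 then G1 k r 0 else GG k r y / y) has_real_derivative D) (at p) \<and>
          0 \<le> D \<and> D \<le> 1 / (r - 1) + 1 / (k - 1)"
proof -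
  define H where "H = (\<lambda>y. if y = 0 then G1 k r 0 else GG k r y / y)"
  have pm: "\<bar>p\<bar> < min k r" using p k r by auto
  have k0: "k > 0" and r0: "r > 0" using k r by auto
  have bnd: "0 \<le> G2 k r t / 2 \<and> G2 k r t / 2 \<le> 1 / (r - 1) + 1 / (k - 1)" if "\<bar>t\<bar> \<le> \<bar>p\<bar>" for t
    using G2_bound[OF k r, of t] that p by auto
  show ?thesis
  proof (cases "p = 0")
    case False
    have ev: "eventually (\<lambda>y. H y = GG k r y / y) (nhds p)"
      unfolding eventually_nhds_metric
      by (rule exI[of _ "\<bar>p\<bar>"]) (use False in \<open>auto simp: H_def dist_real_def\<close>)
    have dG: "(GG k r has_real_derivative G1 k r p) (at p)" using pm by (intro GG_deriv) auto
    have "((\<lambda>y. GG k r y / y) has_real_derivative (G1 k r p * p - GG k r p * 1) / (p * p)) (at p)"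
      by (rule DERIV_divide[OF dG DERIV_ident]) (use False in auto)
    hence dH: "(H has_real_derivative (G1 k r p * p - GG k r p * 1) / (p * p)) (at p)"
      using DERIV_cong_ev[OF refl ev refl] by simp
    have "\<exists>t. (if 0 < p then 0 < t \<and> t < p else p < t \<and> t < 0) \<and>
      GG k r 0 = GG k r p + G1 k r p * (0 - p) + G2 k r t / 2 * (0 - p)^2"
      by (rule taylorG[OF k0 r0 pm]) (use k r False in auto)
    then obtain t where t: "(if 0 < p then 0 < t \<and> t < p else p < t \<and> t < 0)"
      and T: "GG k r 0 = GG k r p + G1 k r p * (0 - p) + G2 k r t / 2 * (0 - p)^2"
      by blast
    have tp: "\<bar>t\<bar> \<le> \<bar>p\<bar>" using t by (auto split: if_splits)
    have "(G1 k r p * p - GG k r p * 1) / (p * p) = G2 k r t / 2"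
      using T False by (simp add: GG0 field_simps power2_eq_square)
    with dH have "(H has_real_derivative G2 k r t / 2) (at p)" by (simp only:)
    thus ?thesis using bnd[OF tp] unfolding H_def by blast
  next
    case True
    have Hd: "(H has_real_derivative G2 k r 0 / 2) (at 0)"
    proof -
      have ex: "\<exists>t. \<bar>t\<bar> \<le> \<bar>y\<bar> \<and> GG k r y = G1 k r 0 * y + G2 k r t / 2 * y^2"
        if y: "y \<noteq> 0" "\<bar>y\<bar> < min k r" for y
      proof -
        have "\<exists>t. (if y < 0 then y < t \<and> t < 0 else 0 < t \<and> t < y) \<and>
          GG k r y = GG k r 0 + G1 k r 0 * (y - 0) + G2 k r t / 2 * (y - 0)^2"
          by (rule taylorG[OF k0 r0 _ y(2)]) (use k r y in auto)
        then obtain t where t: "(if y < 0 then y < t \<and> t < 0 else 0 < t \<and> t < y)"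
          and T: "GG k r y = GG k r 0 + G1 k r 0 * (y - 0) + G2 k r t / 2 * (y - 0)^2"
          by blast
        show ?thesis using t T by (intro exI[of _ t]) (auto simp: GG0 split: if_splits)
      qed
      define \<tau> where "\<tau> = (\<lambda>y. SOME t. \<bar>t\<bar> \<le> \<bar>y\<bar> \<and> GG k r y = G1 k r 0 * y + G2 k r t / 2 * y^2)"
      have tau: "\<bar>\<tau> y\<bar> \<le> \<bar>y\<bar> \<and> GG k r y = G1 k r 0 * y + G2 k r (\<tau> y) / 2 * y^2"
        if "y \<noteq> 0" "\<bar>y\<bar> < min k r" for y
        unfolding \<tau>_def using someI_ex[OF ex[OF that]] .
      have ev: "eventually (\<lambda>y. y \<noteq> 0 \<and> \<bar>y\<bar> < min k r) (at (0::real))"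
        unfolding eventually_at by (rule exI[of _ "min k r"]) (use k r in \<open>auto simp: dist_real_def\<close>)
      have t0: "(\<tau> \<longlongrightarrow> 0) (at 0)"
      proof (rule Lim_null_comparison)
        show "eventually (\<lambda>y. norm (\<tau> y) \<le> \<bar>y\<bar>) (at 0)"
          using ev by eventually_elim (use tau in auto)
        have "((\<lambda>y::real. \<bar>y\<bar>) \<longlongrightarrow> \<bar>0\<bar>) (at 0)" by (intro tendsto_intros)
        thus "((\<lambda>y::real. \<bar>y\<bar>) \<longlongrightarrow> 0) (at 0)" by simp
      qed
      have "((\<lambda>y. G2 k r (\<tau> y)) \<longlongrightarrow> G2 k r 0) (at 0)"
        by (rule isCont_tendsto_compose[OF G2_cont[OF k0 r0] t0])
      hence lim: "((\<lambda>y. G2 k r (\<tau> y) / 2) \<longlongrightarrow> G2 k r 0 / 2) (at 0)"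
        by (intro tendsto_divide tendsto_const) simp_all
      have "eventually (\<lambda>y. G2 k r (\<tau> y) / 2 = (H y - H 0) / (y - 0)) (at 0)"
        using ev
      proof eventually_elim
        case (elim y)
        with tau[of y] have "GG k r y = G1 k r 0 * y + G2 k r (\<tau> y) / 2 * y^2" by auto
        with elim show ?case unfolding H_def by (simp add: field_simps power2_eq_square)
      qed
      from tendsto_cong[THEN iffD1, OF this lim]
      have "((\<lambda>y. (H y - H 0) / (y - 0)) \<longlongrightarrow> G2 k r 0 / 2) (at 0)" .
      thus ?thesis by (simp add: has_field_derivative_iff)
    qed
    thus ?thesis using True bnd[of 0] unfolding H_def by auto
  qed
qed

lemma part2:
  assumes k: "k > 1" and r: "r > 1" and p: "\<bar>p\<bar> \<le> (min r k - 1) / 2"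
  shows "\<exists>D. (beta_ratio_fun k r has_real_derivative D) (at p) \<and>
          0 \<le> D \<and> D \<le> 1 / (r - 1) + 1 / (k - 1)"
proof -
  obtain D where D: "((\<lambda>y. if y = 0 then G1 k r 0 else GG k r y / y) has_real_derivative D) (at p)"
    "0 \<le> D" "D \<le> 1 / (r - 1) + 1 / (k - 1)"
    using part2_H[OF k r p] by blast
  have pm: "\<bar>p\<bar> < min k r" using p k r by auto
  have ev: "eventually (\<lambda>y. beta_ratio_fun k r y = (if y = 0 then G1 k r 0 else GG k r y / y)) (nhds p)"
    unfolding eventually_nhds_metric
  proof (intro exI[of _ "min k r - \<bar>p\<bar>"] conjI allI impI)
    show "min k r - \<bar>p\<bar> > 0" using pm by simp
    fix y assume "dist y p < min k r - \<bar>p\<bar>"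
    hence "\<bar>y - p\<bar> < min k r - \<bar>p\<bar>" by (simp add: dist_real_def)
    hence "\<bar>y\<bar> < min k r" by arith
    thus "beta_ratio_fun k r y = (if y = 0 then G1 k r 0 else GG k r y / y)"
      using k r by (intro F_eq) auto
  qed
  show ?thesis using D DERIV_cong_ev[OF refl ev refl] by blast
qed

theorem lemma1:
  shows "(\<exists>c C :: real. c > 0 \<and> C > 0 \<and>
           (\<forall>x y :: real. x \<ge> 1 \<longrightarrow> y \<ge> 1 \<longrightarrow>
              c * (x / (x + y)) \<le> (x * Beta x y) powr (1 / x) \<and>
              (x * Beta x y) powr (1 / x) \<le> C * (x / (x + y))))
       \<and> (\<forall>k r p :: real. k > 1 \<longrightarrow> r > 1 \<longrightarrow> \<bar>p\<bar> \<le> (min r k - 1) / 2 \<longrightarrow>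
            (\<exists>D. (beta_ratio_fun k r has_real_derivative D) (at p) \<and>
                 0 \<le> D \<and> D \<le> 1 / (r - 1) + 1 / (k - 1)))"
proof (intro conjI allI impI)
  show "\<exists>c C :: real. c > 0 \<and> C > 0 \<and>
           (\<forall>x y :: real. x \<ge> 1 \<longrightarrow> y \<ge> 1 \<longrightarrow>
              c * (x / (x + y)) \<le> (x * Beta x y) powr (1 / x) \<and>
              (x * Beta x y) powr (1 / x) \<le> C * (x / (x + y)))" by (rule part1)
  fix k r p :: real assume "k > 1" "r > 1" "\<bar>p\<bar> \<le> (min r k - 1) / 2"
  thus "\<exists>D. (beta_ratio_fun k r has_real_derivative D) (at p) \<and>
                 0 \<le> D \<and> D \<le> 1 / (r - 1) + 1 / (k - 1)" by (rule part2)
qed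

end
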